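(* Let $D$ be a finite set of documents, each document being a finite set of terms, and let $m$ be a positive integer dividing $|D|$. For a bijection $\pi$ assigning to the documents the identifiers $1,\dots,|D|$, let $\mathcal{P}(\pi)$ be the total Delta-encoded size of all postings lists of the single-node index in which document $d$ has identifier $\pi(d)$. For a partition $g$ of $D$ into $m$ disjoint sets (nodes) of $|D|/m$ documents each, let $\mathcal{P}^m(\pi,g)$ be the sum over the $m$ nodes of the total Delta-encoded size of all postings lists of that node's index, where within each node the documents receive identifiers $1,\dots,|D|/m$ in the order induced by $\pi$. If $\pi$ is drawn uniformly at random among all $|D|!$ bijections and, independently, $g$ is drawn uniformly at random among all such equal partitions, then \[\mathbb{E}_{\pi,g}\left[\mathcal{P}(\pi)-\mathcal{P}^m(\pi,g)\right]\ \ge\ 0\ .\]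
   Context: Index model: for an index over a set of documents with distinct identifiers, the postings list of a term $t$ consists of the identifiers $1\le d^t_1<d^t_2<\dots<d^t_{n_t}$ of the documents containing $t$; its encoded size is $\delta(d^t_1)+\sum_{j=2}^{n_t}\delta(d^t_j-d^t_{j-1})$, where for a positive integer $k$ the Delta encoding length is $\delta(k)=1+\lfloor\log_2 k\rfloor+2\lfloor\log_2(1+\lfloor\log_2 k\rfloor)\rfloor$. The total size of an index is the sum of the encoded sizes of the postings lists of all terms occurring in its documents (no dictionary overhead is counted). *)

theory Defs
  imports Complex_Main "HOL-Library.FuncSet"
begin

definition delta :: "nat \<Rightarrow> nat" where
  "delta k = 1 + nat \<lfloor>log 2 (real k)\<rfloor>
             + 2 * nat \<lfloor>log 2 (real (1 + nat \<lfloor>log 2 (real k)\<rfloor>))\<rfloor>"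

fun gap_size :: "nat \<Rightarrow> nat list \<Rightarrow> nat" where
  "gap_size p [] = 0"
| "gap_size p (x # xs) = delta (x - p) + gap_size x xs"

definition list_size :: "nat list \<Rightarrow> nat" where
  "list_size xs = gap_size 0 xs"

definition postings :: "'t set set \<Rightarrow> ('t set \<Rightarrow> nat) \<Rightarrow> 't \<Rightarrow> nat list" where
  "postings S ident t = sorted_list_of_set (ident ` {d \<in> S. t \<in> d})"

definition index_size :: "'t set set \<Rightarrow> ('t set \<Rightarrow> nat) \<Rightarrow> nat" where
  "index_size S ident = (\<Sum>t \<in> \<Union>S. list_size (postings S ident t))"

text \<open>Identifier assignments: bijections from D onto {1..|D|} (extensional, so
  there are exactly |D|! of them).\<close>
definition id_assignments :: "'t set set \<Rightarrow> ('t set \<Rightarrow> nat) set" where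
  "id_assignments D = {\<pi>. \<pi> \<in> extensional D \<and> bij_betw \<pi> D {1..card D}}"

definition equal_partitions :: "'t set set \<Rightarrow> nat \<Rightarrow> ('t set \<Rightarrow> nat) set" where
  "equal_partitions D m = {g. g \<in> D \<rightarrow>\<^sub>E {..<m} \<and>
       (\<forall>i<m. card {d \<in> D. g d = i} = card D div m)}"

definition local_ids :: "'t set set \<Rightarrow> ('t set \<Rightarrow> nat) \<Rightarrow> 't set \<Rightarrow> nat" where
  "local_ids S \<pi> d = card {d' \<in> S. \<pi> d' \<le> \<pi> d}"

definition P_single :: "'t set set \<Rightarrow> ('t set \<Rightarrow> nat) \<Rightarrow> nat" where
  "P_single D \<pi> = index_size D \<pi>"

definition P_multi :: "'t set set \<Rightarrow> nat \<Rightarrow> ('t set \<Rightarrow> nat) \<Rightarrow> ('t set \<Rightarrow> nat) \<Rightarrow> nat" where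
  "P_multi D m \<pi> g = (\<Sum>i<m. let S = {d \<in> D. g d = i} in index_size S (local_ids S \<pi>))"

end

theory Submission
  imports Defs
begin

lemma delta_ge1: "delta k \<ge> 1" by (simp add: delta_def)

lemma nat_floor_log_mono:
  assumes "a \<le> b" shows "nat \<lfloor>log 2 (real a)\<rfloor> \<le> nat \<lfloor>log 2 (real b)\<rfloor>"
proof (cases "a = 0")
  case True then show ?thesis by (simp add: log_def)
next
  case False
  then have "log 2 (real a) \<le> log 2 (real b)" using assms by simp
  then show ?thesis by (intro nat_mono floor_mono)
qed

lemma delta_mono: "a \<le> b \<Longrightarrow> delta a \<le> delta b"
  unfolding delta_def
  apply (rule add_mono)
   apply (simp add: nat_floor_log_mono)
  apply (rule mult_le_mono2)
  apply (rule nat_floor_log_mono)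
  apply (simp add: nat_floor_log_mono)
  done

lemma gap_shift: "q \<le> p + c \<Longrightarrow> gap_size p L \<le> gap_size q (map ((+) c) L)"
proof (induction L arbitrary: p q)
  case Nil then show ?case by simp
next
  case (Cons x L)
  have "delta (x - p) \<le> delta (c + x - q)" using Cons.prems by (intro delta_mono) simp
  moreover have "gap_size x L \<le> gap_size (c + x) (map ((+) c) L)" using Cons.IH by simp
  ultimately show ?case by simp
qed

lemma gap_append: "gap_size p (xs @ ys) = gap_size p xs + gap_size (last (p # xs)) ys"
  by (induction xs arbitrary: p) auto

lemma sorted_union:
  fixes A B :: "nat set"
  assumes "finite A" "finite B" "\<forall>a\<in>A. \<forall>b\<in>B. a < b"
  shows "sorted_list_of_set (A \<union> B) = sorted_list_of_set A @ sorted_list_of_set B"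
proof -
  have d: "A \<inter> B = {}" using assms(3) by auto
  show ?thesis
    apply (subst sorted_list_of_set_unique[symmetric])
    using assms d by (auto simp: sorted_wrt_append card_Un_disjoint)
qed

lemma sorted_shift:
  fixes Y :: "nat set"
  assumes "finite Y"
  shows "sorted_list_of_set ((+) c ` Y) = map ((+) c) (sorted_list_of_set Y)"
proof -
  have "sorted_wrt (<) (sorted_list_of_set Y)" by simp
  then have "sorted_wrt (<) (map ((+) c) (sorted_list_of_set Y))"
    by (simp add: sorted_wrt_map)
  then show ?thesis
    apply (subst sorted_list_of_set_unique[symmetric])
    using assms by (auto simp: card_image)
qed

lemma block_ineq:
  fixes Y :: "nat \<Rightarrow> nat set"
  assumes "\<forall>i<k. finite (Y i) \<and> Y i \<subseteq> {1..n}"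
  shows "(\<Sum>i<k. gap_size 0 (sorted_list_of_set (Y i)))
         \<le> gap_size 0 (sorted_list_of_set (\<Union>i<k. (+) (i*n) ` Y i))"
  using assms
proof (induction k)
  case 0 then show ?case by simp
next
  case (Suc k)
  let ?U = "\<Union>i<k. (+) (i*n) ` Y i"
  let ?B = "(+) (k*n) ` Y k"
  have fin: "finite ?U" using Suc.prems by auto
  have finY: "finite (Y k)" using Suc.prems by auto
  have le: "\<forall>u\<in>?U. u \<le> k*n"
  proof
    fix u assume "u \<in> ?U"
    then obtain i y where "i < k" "y \<in> Y i" "u = i*n + y" by auto
    moreover have "y \<le> n" using Suc.prems \<open>i<k\<close> \<open>y \<in> Y i\<close> by (metis atLeastAtMost_iff less_SucI subsetD)
    moreover have "i*n + n \<le> k*n" using \<open>i<k\<close>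
      by (metis add.commute less_eq_Suc_le mult_Suc mult_le_mono1)
    ultimately show "u \<le> k*n" by linarith
  qed
  have gt: "\<forall>b\<in>?B. k*n < b" using Suc.prems by force
  have U: "(\<Union>i<Suc k. (+) (i*n) ` Y i) = ?U \<union> ?B"
    by (simp add: lessThan_Suc Un_commute)
  have sl: "sorted_list_of_set (?U \<union> ?B) = sorted_list_of_set ?U @ map ((+) (k*n)) (sorted_list_of_set (Y k))"
  proof -
    have "\<forall>a\<in>?U. \<forall>b\<in>?B. a < b" using le gt by (meson le_less_trans)
    then have "sorted_list_of_set (?U \<union> ?B) = sorted_list_of_set ?U @ sorted_list_of_set ?B"
      using fin finY by (intro sorted_union) auto
    then show ?thesis using sorted_shift[OF finY] by simp
  qed
  have lst: "last (0 # sorted_list_of_set ?U) \<le> k*n"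
  proof -
    have "\<forall>x\<in>set (0 # sorted_list_of_set ?U). x \<le> k*n" using le fin by simp
    then show ?thesis using last_in_set[of "0 # sorted_list_of_set ?U"] by blast
  qed
  have "gap_size 0 (sorted_list_of_set (Y k)) \<le> gap_size (last (0 # sorted_list_of_set ?U)) (map ((+) (k*n)) (sorted_list_of_set (Y k)))"
    using lst by (intro gap_shift) simp
  moreover have "(\<Sum>i<k. gap_size 0 (sorted_list_of_set (Y i))) \<le> gap_size 0 (sorted_list_of_set ?U)"
    using Suc by auto
  ultimately show ?case unfolding U sl gap_append by simp
qed


lemma loc_pos: "finite S \<Longrightarrow> d \<in> S \<Longrightarrow> 1 \<le> local_ids S \<pi> d"
  unfolding local_ids_def by (metis (mono_tags, lifting) One_nat_def Suc_leI card_gt_0_iff empty_iff finite_subset mem_Collect_eq order_refl subsetI)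

lemma loc_le: "finite S \<Longrightarrow> local_ids S \<pi> d \<le> card S"
  unfolding local_ids_def by (intro card_mono) auto

lemma loc_strict: "finite S \<Longrightarrow> d2 \<in> S \<Longrightarrow> \<pi> d1 < \<pi> d2 \<Longrightarrow> local_ids S \<pi> d1 < local_ids S \<pi> d2"
  unfolding local_ids_def
proof (intro psubset_card_mono)
  assume a: "finite S" "d2 \<in> S" "\<pi> d1 < \<pi> d2"
  show "finite {d' \<in> S. \<pi> d' \<le> \<pi> d2}" using a by simp
  have "d2 \<in> {d' \<in> S. \<pi> d' \<le> \<pi> d2}" "d2 \<notin> {d' \<in> S. \<pi> d' \<le> \<pi> d1}" using a by auto
  moreover have "{d' \<in> S. \<pi> d' \<le> \<pi> d1} \<subseteq> {d' \<in> S. \<pi> d' \<le> \<pi> d2}" using a by auto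
  ultimately show "{d' \<in> S. \<pi> d' \<le> \<pi> d1} \<subset> {d' \<in> S. \<pi> d' \<le> \<pi> d2}" by blast
qed

lemma loc_mono: "finite S \<Longrightarrow> \<pi> d1 \<le> \<pi> d2 \<Longrightarrow> local_ids S \<pi> d1 \<le> local_ids S \<pi> d2"
  unfolding local_ids_def by (intro card_mono) auto

definition Phi :: "'t set set \<Rightarrow> nat \<Rightarrow> ('t set \<Rightarrow> nat) \<Rightarrow> ('t set \<Rightarrow> nat) \<Rightarrow> ('t set \<Rightarrow> nat)" where
  "Phi D m \<pi> g = (\<lambda>d. if d \<in> D then g d * (card D div m) + local_ids {d' \<in> D. g d' = g d} \<pi> d else undefined)"

definition Gam :: "'t set set \<Rightarrow> nat \<Rightarrow> ('t set \<Rightarrow> nat) \<Rightarrow> ('t set \<Rightarrow> nat) \<Rightarrow> ('t set \<Rightarrow> nat)" where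
  "Gam D m \<pi> g = (\<lambda>d. if d \<in> D then g (inv_into D \<pi> (Phi D m \<pi> g d)) else undefined)"

lemma pointwise:
  fixes D :: "'t set set"
  assumes fD: "finite D" and fd: "\<forall>d \<in> D. finite d" and g: "g \<in> equal_partitions D m"
  shows "P_multi D m \<pi> g \<le> P_single D (Phi D m \<pi> g)"
proof -
  define n where "n = card D div m"
  define S where "S i = {d \<in> D. g d = i}" for i
  define loc where "loc i = local_ids (S i) \<pi>" for i
  have gm: "\<And>d. d \<in> D \<Longrightarrow> g d < m" using g unfolding equal_partitions_def by auto
  have cS: "\<And>i. i < m \<Longrightarrow> card (S i) = n" using g unfolding equal_partitions_def S_def n_def by auto
  have fS: "\<And>i. finite (S i)" using fD unfolding S_def by auto
  have fU: "finite (\<Union>D)" using fD fd by auto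
  have Phi_eq: "\<And>d. d \<in> D \<Longrightarrow> Phi D m \<pi> g d = g d * n + loc (g d) d"
    unfolding Phi_def loc_def S_def n_def by simp
  have tm: "(\<Sum>i<m. list_size (postings (S i) (loc i) t)) \<le> list_size (postings D (Phi D m \<pi> g) t)" for t
  proof -
    define Y where "Y i = loc i ` {d \<in> S i. t \<in> d}" for i
    have Y: "\<forall>i<m. finite (Y i) \<and> Y i \<subseteq> {1..n}"
    proof (intro allI impI conjI)
      fix i assume "i < m"
      show "finite (Y i)" unfolding Y_def using fS by auto
      show "Y i \<subseteq> {1..n}"
      proof
        fix y assume "y \<in> Y i"
        then obtain d where d: "d \<in> S i" "y = loc i d" unfolding Y_def by auto
        have "1 \<le> y" using loc_pos[OF fS d(1)] d(2) loc_def by simp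
        moreover have "y \<le> n" using loc_le[OF fS, of i \<pi> d] d(2) cS[OF \<open>i<m\<close>] loc_def by simp
        ultimately show "y \<in> {1..n}" by simp
      qed
    qed
    have img: "Phi D m \<pi> g ` {d \<in> D. t \<in> d} = (\<Union>i<m. (+) (i*n) ` Y i)"
    proof
      show "Phi D m \<pi> g ` {d \<in> D. t \<in> d} \<subseteq> (\<Union>i<m. (+) (i*n) ` Y i)"
      proof
        fix x assume "x \<in> Phi D m \<pi> g ` {d \<in> D. t \<in> d}"
        then obtain d where d: "d \<in> D" "t \<in> d" "x = Phi D m \<pi> g d" by auto
        then have "x = g d * n + loc (g d) d" using Phi_eq by simp
        moreover have "loc (g d) d \<in> Y (g d)" unfolding Y_def S_def using d by auto
        ultimately show "x \<in> (\<Union>i<m. (+) (i*n) ` Y i)" using gm[OF d(1)] by auto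
      qed
    next
      show "(\<Union>i<m. (+) (i*n) ` Y i) \<subseteq> Phi D m \<pi> g ` {d \<in> D. t \<in> d}"
      proof
        fix x assume "x \<in> (\<Union>i<m. (+) (i*n) ` Y i)"
        then obtain i d where "i < m" "d \<in> S i" "t \<in> d" "x = i*n + loc i d" unfolding Y_def by auto
        moreover then have "d \<in> D" "g d = i" unfolding S_def by auto
        ultimately show "x \<in> Phi D m \<pi> g ` {d \<in> D. t \<in> d}" using Phi_eq by force
      qed
    qed
    have "(\<Sum>i<m. list_size (postings (S i) (loc i) t)) = (\<Sum>i<m. gap_size 0 (sorted_list_of_set (Y i)))"
      unfolding list_size_def postings_def Y_def by simp
    also have "\<dots> \<le> gap_size 0 (sorted_list_of_set (\<Union>i<m. (+) (i*n) ` Y i))"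
      by (rule block_ineq[OF Y])
    also have "\<dots> = list_size (postings D (Phi D m \<pi> g) t)"
      unfolding list_size_def postings_def img by simp
    finally show ?thesis .
  qed
  have "P_multi D m \<pi> g = (\<Sum>i<m. index_size (S i) (loc i))"
    unfolding P_multi_def S_def loc_def by (simp add: Let_def)
  also have "\<dots> = (\<Sum>i<m. \<Sum>t\<in>\<Union>D. list_size (postings (S i) (loc i) t))"
  proof (rule sum.cong[OF refl])
    fix i
    show "index_size (S i) (loc i) = (\<Sum>t\<in>\<Union>D. list_size (postings (S i) (loc i) t))"
      unfolding index_size_def
    proof (rule sum.mono_neutral_left[OF fU])
      show "\<Union>(S i) \<subseteq> \<Union>D" unfolding S_def by auto
      show "\<forall>t\<in>\<Union>D - \<Union>(S i). list_size (postings (S i) (loc i) t) = 0"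
      proof
        fix t assume "t \<in> \<Union>D - \<Union>(S i)"
        then have "{d \<in> S i. t \<in> d} = {}" by auto
        then show "list_size (postings (S i) (loc i) t) = 0"
          unfolding postings_def list_size_def by (simp only:) simp
      qed
    qed
  qed
  also have "\<dots> = (\<Sum>t\<in>\<Union>D. \<Sum>i<m. list_size (postings (S i) (loc i) t))"
    by (rule sum.swap)
  also have "\<dots> \<le> (\<Sum>t\<in>\<Union>D. list_size (postings D (Phi D m \<pi> g) t))"
    by (intro sum_mono tm)
  also have "\<dots> = P_single D (Phi D m \<pi> g)"
    unfolding P_single_def index_size_def ..
  finally show ?thesis .
qed


lemma Phi_decomp:
  assumes fD: "finite D" and m: "m > 0" "m dvd card D" and g: "g \<in> equal_partitions D m" and d: "d \<in> D"
  shows "Phi D m \<pi> g d = g d * (card D div m) + local_ids {d'\<in>D. g d' = g d} \<pi> d"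
    and "1 \<le> local_ids {d'\<in>D. g d' = g d} \<pi> d"
    and "local_ids {d'\<in>D. g d' = g d} \<pi> d \<le> card D div m"
    and "g d < m"
proof -
  show "Phi D m \<pi> g d = g d * (card D div m) + local_ids {d'\<in>D. g d' = g d} \<pi> d"
    unfolding Phi_def using d by simp
  show "1 \<le> local_ids {d'\<in>D. g d' = g d} \<pi> d" using fD d by (intro loc_pos) auto
  show gm: "g d < m" using g d unfolding equal_partitions_def by auto
  have "card {d'\<in>D. g d' = g d} = card D div m" using g gm unfolding equal_partitions_def by auto
  then show "local_ids {d'\<in>D. g d' = g d} \<pi> d \<le> card D div m"
    using loc_le[of "{d'\<in>D. g d' = g d}" \<pi> d] fD by simp
qed

lemma Phi_div:
  assumes fD: "finite D" and m: "m > 0" "m dvd card D" and g: "g \<in> equal_partitions D m" and d: "d \<in> D"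
  shows "(Phi D m \<pi> g d - 1) div (card D div m) = g d"
    and "Phi D m \<pi> g d \<in> {1..card D}"
proof -
  define n where "n = card D div m"
  define l where "l = local_ids {d'\<in>D. g d' = g d} \<pi> d"
  note dc = Phi_decomp(1-3)[OF assms, of \<pi>, folded n_def l_def] Phi_decomp(4)[OF assms]
  have "card D > 0" using fD d by (auto simp: card_gt_0_iff)
  then have N: "card D = m * n" using m unfolding n_def by simp
  then have npos: "n > 0" using \<open>card D > 0\<close> by (cases n) auto
  have e: "Phi D m \<pi> g d - 1 = (l - 1) + g d * n" using dc by simp
  have "((l - 1) + g d * n) div n = g d + (l - 1) div n" using npos by simp
  moreover have "(l - 1) div n = 0" using dc npos by simp
  ultimately show "(Phi D m \<pi> g d - 1) div (card D div m) = g d"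
    using e by (simp add: n_def[symmetric])
  have "(g d + 1) * n \<le> m * n" using dc by (intro mult_le_mono1) simp
  then show "Phi D m \<pi> g d \<in> {1..card D}" using dc N by (simp add: algebra_simps)
qed

lemma Phi_in_A:
  assumes fD: "finite D" and m: "m > 0" "m dvd card D" and g: "g \<in> equal_partitions D m"
    and p: "\<pi> \<in> id_assignments D"
  shows "Phi D m \<pi> g \<in> id_assignments D"
proof -
  have inj\<pi>: "inj_on \<pi> D" using p unfolding id_assignments_def bij_betw_def by auto
  have inj: "inj_on (Phi D m \<pi> g) D"
  proof (rule inj_onI)
    fix d1 d2 assume d: "d1 \<in> D" "d2 \<in> D" and eq: "Phi D m \<pi> g d1 = Phi D m \<pi> g d2"
    have geq: "g d1 = g d2" using Phi_div(1)[OF fD m g d(1), of \<pi>] Phi_div(1)[OF fD m g d(2), of \<pi>] eq by simp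
    define S where "S = {d'\<in>D. g d' = g d1}"
    have S2: "S = {d'\<in>D. g d' = g d2}" using geq S_def by simp
    have leq: "local_ids S \<pi> d1 = local_ids S \<pi> d2"
      using Phi_decomp(1)[OF fD m g d(1), of \<pi>] Phi_decomp(1)[OF fD m g d(2), of \<pi>] eq geq S_def by simp
    have fS: "finite S" using fD S_def by simp
    have "d1 \<in> S" "d2 \<in> S" using d geq S_def by auto
    have "\<not> \<pi> d1 < \<pi> d2"
    proof
      assume "\<pi> d1 < \<pi> d2"
      then have "local_ids S \<pi> d1 < local_ids S \<pi> d2" by (rule loc_strict[OF fS \<open>d2 \<in> S\<close>])
      with leq show False by simp
    qed
    moreover have "\<not> \<pi> d2 < \<pi> d1"
    proof
      assume "\<pi> d2 < \<pi> d1"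
      then have "local_ids S \<pi> d2 < local_ids S \<pi> d1" by (rule loc_strict[OF fS \<open>d1 \<in> S\<close>])
      with leq show False by simp
    qed
    ultimately have "\<pi> d1 = \<pi> d2" by simp
    then show "d1 = d2" using inj\<pi> d by (meson inj_onD)
  qed
  have sub: "Phi D m \<pi> g ` D \<subseteq> {1..card D}" using Phi_div(2)[OF fD m g] by auto
  have "card (Phi D m \<pi> g ` D) = card {1..card D}" using card_image[OF inj] by simp
  then have "Phi D m \<pi> g ` D = {1..card D}" using sub by (intro card_subset_eq) auto
  moreover have "Phi D m \<pi> g \<in> extensional D" unfolding Phi_def extensional_def by auto
  ultimately show ?thesis unfolding id_assignments_def bij_betw_def using inj by auto
qed

lemma Gam_in_G:
  assumes fD: "finite D" and m: "m > 0" "m dvd card D" and g: "g \<in> equal_partitions D m"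
    and p: "\<pi> \<in> id_assignments D"
  shows "Gam D m \<pi> g \<in> equal_partitions D m"
proof -
  define \<sigma> where "\<sigma> = inv_into D \<pi> \<circ> Phi D m \<pi> g"
  have b1: "bij_betw (Phi D m \<pi> g) D {1..card D}"
    using Phi_in_A[OF assms] unfolding id_assignments_def by auto
  have b2: "bij_betw (inv_into D \<pi>) {1..card D} D"
    using p unfolding id_assignments_def by (auto intro: bij_betw_inv_into)
  have bs: "bij_betw \<sigma> D D" unfolding \<sigma>_def using bij_betw_trans[OF b1 b2] .
  have G: "\<And>d. d \<in> D \<Longrightarrow> Gam D m \<pi> g d = g (\<sigma> d)" unfolding Gam_def \<sigma>_def by simp
  have gm: "\<And>d. d \<in> D \<Longrightarrow> g d < m" using g unfolding equal_partitions_def by auto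
  have "Gam D m \<pi> g \<in> D \<rightarrow>\<^sub>E {..<m}"
  proof
    fix d assume "d \<in> D" then show "Gam D m \<pi> g d \<in> {..<m}"
      using G gm bs by (auto simp: bij_betw_def)
  next
    fix d assume "d \<notin> D" then show "Gam D m \<pi> g d = undefined" unfolding Gam_def by simp
  qed
  moreover have "card {d \<in> D. Gam D m \<pi> g d = i} = card D div m" if "i < m" for i
  proof -
    have "{d \<in> D. Gam D m \<pi> g d = i} = {d \<in> D. g (\<sigma> d) = i}" using G by auto
    moreover have "\<sigma> ` {d \<in> D. g (\<sigma> d) = i} = {e \<in> D. g e = i}"
    proof
      show "\<sigma> ` {d \<in> D. g (\<sigma> d) = i} \<subseteq> {e \<in> D. g e = i}" using bs by (auto simp: bij_betw_def)
      show "{e \<in> D. g e = i} \<subseteq> \<sigma> ` {d \<in> D. g (\<sigma> d) = i}"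
      proof
        fix e assume e: "e \<in> {e \<in> D. g e = i}"
        then obtain d where "d \<in> D" "e = \<sigma> d" using bs by (auto simp: bij_betw_def)
        then show "e \<in> \<sigma> ` {d \<in> D. g (\<sigma> d) = i}" using e by auto
      qed
    qed
    moreover have "inj_on \<sigma> {d \<in> D. g (\<sigma> d) = i}"
    proof (rule inj_on_subset[of \<sigma> D])
      show "inj_on \<sigma> D" using bs by (simp add: bij_betw_def)
    qed auto
    ultimately have "card {d \<in> D. Gam D m \<pi> g d = i} = card {e \<in> D. g e = i}"
      using card_image[of \<sigma> "{d \<in> D. g (\<sigma> d) = i}"] by simp
    then show ?thesis using g that unfolding equal_partitions_def by auto
  qed
  ultimately show ?thesis unfolding equal_partitions_def by auto
qed


lemma loc_char:
  assumes fD: "finite D" and p: "\<pi> \<in> id_assignments D" and d: "d \<in> D"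
  shows "local_ids {d'\<in>D. g d' = g d} \<pi> d
         = card {q \<in> {1..card D}. q \<le> \<pi> d \<and> g (inv_into D \<pi> q) = g d}"
proof -
  have b: "bij_betw \<pi> D {1..card D}" using p unfolding id_assignments_def by auto
  then have inj: "inj_on \<pi> D" and im: "\<pi> ` D = {1..card D}" by (auto simp: bij_betw_def)
  define X where "X = {d' \<in> {d'\<in>D. g d' = g d}. \<pi> d' \<le> \<pi> d}"
  have "\<pi> ` X = {q \<in> {1..card D}. q \<le> \<pi> d \<and> g (inv_into D \<pi> q) = g d}"
  proof
    show "\<pi> ` X \<subseteq> {q \<in> {1..card D}. q \<le> \<pi> d \<and> g (inv_into D \<pi> q) = g d}"
    proof
      fix q assume "q \<in> \<pi> ` X"
      then obtain d' where d': "d' \<in> D" "g d' = g d" "\<pi> d' \<le> \<pi> d" "q = \<pi> d'" unfolding X_def by auto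
      have "inv_into D \<pi> q = d'" using d' inj by (simp add: inv_into_f_f)
      moreover have "q \<in> {1..card D}" using d' im by auto
      ultimately show "q \<in> {q \<in> {1..card D}. q \<le> \<pi> d \<and> g (inv_into D \<pi> q) = g d}" using d' by simp
    qed
    show "{q \<in> {1..card D}. q \<le> \<pi> d \<and> g (inv_into D \<pi> q) = g d} \<subseteq> \<pi> ` X"
    proof
      fix q assume q: "q \<in> {q \<in> {1..card D}. q \<le> \<pi> d \<and> g (inv_into D \<pi> q) = g d}"
      then obtain d' where d': "d' \<in> D" "q = \<pi> d'" using im by (metis (no_types, lifting) imageE mem_Collect_eq)
      have "inv_into D \<pi> q = d'" using d' inj by (simp add: inv_into_f_f)
      then show "q \<in> \<pi> ` X" using q d' unfolding X_def by auto
    qed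
  qed
  moreover have "inj_on \<pi> X" using inj by (rule inj_on_subset) (auto simp: X_def)
  ultimately show ?thesis unfolding local_ids_def X_def[symmetric] using card_image by metis
qed

lemma card_strict:
  fixes H :: "nat \<Rightarrow> nat"
  assumes "q0 \<in> {1..N}" "H q0 = c" "a < q0" "q0 \<le> b"
  shows "card {q \<in> {1..N}. q \<le> a \<and> H q = c} < card {q \<in> {1..N}. q \<le> b \<and> H q = c}"
proof (rule psubset_card_mono)
  show "finite {q \<in> {1..N}. q \<le> b \<and> H q = c}" by simp
  have "q0 \<in> {q \<in> {1..N}. q \<le> b \<and> H q = c}" "q0 \<notin> {q \<in> {1..N}. q \<le> a \<and> H q = c}"
    using assms by auto
  moreover have "{q \<in> {1..N}. q \<le> a \<and> H q = c} \<subseteq> {q \<in> {1..N}. q \<le> b \<and> H q = c}"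
    using assms by auto
  ultimately show "{q \<in> {1..N}. q \<le> a \<and> H q = c} \<subset> {q \<in> {1..N}. q \<le> b \<and> H q = c}" by blast
qed

lemma PiE_ext: "g \<in> equal_partitions D m \<Longrightarrow> g \<in> extensional D"
  unfolding equal_partitions_def by (auto simp: PiE_def)

lemma Psi_inj:
  assumes fD: "finite D" and m: "m > 0" "m dvd card D"
    and p1: "\<pi>1 \<in> id_assignments D" and p2: "\<pi>2 \<in> id_assignments D"
    and g1: "g1 \<in> equal_partitions D m" and g2: "g2 \<in> equal_partitions D m"
    and eP: "Phi D m \<pi>1 g1 = Phi D m \<pi>2 g2" and eG: "Gam D m \<pi>1 g1 = Gam D m \<pi>2 g2"
  shows "\<pi>1 = \<pi>2 \<and> g1 = g2"
proof -
  have gg: "g1 = g2"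
  proof (rule extensionalityI[OF PiE_ext[OF g1] PiE_ext[OF g2]])
    fix d assume d: "d \<in> D"
    show "g1 d = g2 d" using Phi_div(1)[OF fD m g1 d, of \<pi>1] Phi_div(1)[OF fD m g2 d, of \<pi>2] eP by simp
  qed
  define g where "g = g1"
  have g: "g \<in> equal_partitions D m" using g1 g_def by simp
  have eP': "Phi D m \<pi>1 g = Phi D m \<pi>2 g" using eP gg g_def by simp
  have eG': "Gam D m \<pi>1 g = Gam D m \<pi>2 g" using eG gg g_def by simp
  have im: "Phi D m \<pi>1 g ` D = {1..card D}"
    using Phi_in_A[OF fD m g p1] unfolding id_assignments_def bij_betw_def by auto
  have H: "g (inv_into D \<pi>1 q) = g (inv_into D \<pi>2 q)" if q: "q \<in> {1..card D}" for q
  proof -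
    obtain d where d: "d \<in> D" "q = Phi D m \<pi>1 g d" using q im by (metis imageE)
    have "Gam D m \<pi>1 g d = Gam D m \<pi>2 g d" using eG' by simp
    then show ?thesis using d eP' unfolding Gam_def by simp
  qed
  have loceq: "local_ids {d'\<in>D. g d' = g d} \<pi>1 d = local_ids {d'\<in>D. g d' = g d} \<pi>2 d" if d: "d \<in> D" for d
    using Phi_decomp(1)[OF fD m g d, of \<pi>1] Phi_decomp(1)[OF fD m g d, of \<pi>2] eP' by simp
  define h where "h q = g (inv_into D \<pi>1 q)" for q
  have c1: "local_ids {d'\<in>D. g d' = g d} \<pi>1 d = card {q \<in> {1..card D}. q \<le> \<pi>1 d \<and> h q = g d}"
    if d: "d \<in> D" for d
    using loc_char[OF fD p1 d, of g] unfolding h_def .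
  have c2: "local_ids {d'\<in>D. g d' = g d} \<pi>2 d = card {q \<in> {1..card D}. q \<le> \<pi>2 d \<and> h q = g d}"
    if d: "d \<in> D" for d
  proof -
    have "{q \<in> {1..card D}. q \<le> \<pi>2 d \<and> g (inv_into D \<pi>2 q) = g d}
        = {q \<in> {1..card D}. q \<le> \<pi>2 d \<and> h q = g d}" using H unfolding h_def by auto
    then show ?thesis using loc_char[OF fD p2 d, of g] by simp
  qed
  have b1: "bij_betw \<pi>1 D {1..card D}" and b2: "bij_betw \<pi>2 D {1..card D}"
    using p1 p2 unfolding id_assignments_def by auto
  have pe: "\<pi>1 d = \<pi>2 d" if d: "d \<in> D" for d
  proof -
    have in1: "\<pi>1 d \<in> {1..card D}" using b1 d by (auto simp: bij_betw_def)
    have in2: "\<pi>2 d \<in> {1..card D}" using b2 d by (auto simp: bij_betw_def)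
    have h1: "h (\<pi>1 d) = g d" unfolding h_def using b1 d by (simp add: bij_betw_def inv_into_f_f)
    have h2: "h (\<pi>2 d) = g d" using H[OF in2] b2 d unfolding h_def by (simp add: bij_betw_def inv_into_f_f)
    have "\<not> \<pi>1 d < \<pi>2 d"
    proof
      assume "\<pi>1 d < \<pi>2 d"
      from card_strict[where H=h, OF in2 h2 this order_refl] show False using c1[OF d] c2[OF d] loceq[OF d] by simp
    qed
    moreover have "\<not> \<pi>2 d < \<pi>1 d"
    proof
      assume "\<pi>2 d < \<pi>1 d"
      from card_strict[where H=h, OF in1 h1 this order_refl] show False using c1[OF d] c2[OF d] loceq[OF d] by simp
    qed
    ultimately show ?thesis by simp
  qed
  have "\<pi>1 = \<pi>2"
    by (rule extensionalityI[of _ D]) (use p1 p2 pe in \<open>auto simp: id_assignments_def\<close>)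
  then show ?thesis using gg by simp
qed


theorem mainTheorem2:
  fixes D :: "'t set set" and m :: nat
  assumes "finite D" and "\<forall>d \<in> D. finite d" and "m > 0" and "m dvd card D"
  shows "(\<Sum>\<pi> \<in> id_assignments D. \<Sum>g \<in> equal_partitions D m.
            real (P_single D \<pi>) - real (P_multi D m \<pi> g))
         / real (card (id_assignments D) * card (equal_partitions D m)) \<ge> 0"
proof -
  note fD = assms(1) and fd = assms(2) and m = assms(3,4)
  define A where "A = id_assignments D"
  define G where "G = equal_partitions D m"
  define \<Psi> where "\<Psi> x = (Phi D m (fst x) (snd x), Gam D m (fst x) (snd x))" for x
  have finA: "finite A"
  proof (rule finite_subset)
    show "A \<subseteq> D \<rightarrow>\<^sub>E {1..card D}"
      unfolding A_def id_assignments_def by (auto simp: PiE_def bij_betw_def)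
    show "finite (D \<rightarrow>\<^sub>E {1..card D})" using fD by (intro finite_PiE) auto
  qed
  have finG: "finite G"
  proof (rule finite_subset)
    show "G \<subseteq> D \<rightarrow>\<^sub>E {..<m}" unfolding G_def equal_partitions_def by auto
    show "finite (D \<rightarrow>\<^sub>E {..<m})" using fD by (intro finite_PiE) auto
  qed
  have fin: "finite (A \<times> G)" using finA finG by simp
  have into: "\<Psi> ` (A \<times> G) \<subseteq> A \<times> G"
    unfolding \<Psi>_def A_def G_def using Phi_in_A[OF fD m] Gam_in_G[OF fD m] by auto
  have inj: "inj_on \<Psi> (A \<times> G)"
  proof (rule inj_onI)
    fix x y assume x: "x \<in> A \<times> G" and y: "y \<in> A \<times> G" and e: "\<Psi> x = \<Psi> y"
    have "fst x = fst y \<and> snd x = snd y"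
      using x y e unfolding \<Psi>_def A_def G_def
      by (intro Psi_inj[OF fD m]) auto
    then show "x = y" by (simp add: prod_eq_iff)
  qed
  have surj: "\<Psi> ` (A \<times> G) = A \<times> G" using endo_inj_surj[OF fin into inj] .
  have "(\<Sum>x\<in>A \<times> G. real (P_single D (fst x))) = (\<Sum>x\<in>\<Psi> ` (A \<times> G). real (P_single D (fst x)))"
    using surj by simp
  also have "\<dots> = (\<Sum>x\<in>A \<times> G. real (P_single D (fst (\<Psi> x))))"
    using sum.reindex[OF inj] by simp
  also have "\<dots> \<ge> (\<Sum>x\<in>A \<times> G. real (P_multi D m (fst x) (snd x)))"
  proof (rule sum_mono)
    fix x assume "x \<in> A \<times> G"
    then have "snd x \<in> equal_partitions D m" unfolding G_def by auto
    then show "real (P_multi D m (fst x) (snd x)) \<le> real (P_single D (fst (\<Psi> x)))"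
      unfolding \<Psi>_def using pointwise[OF fD fd] by simp
  qed
  finally have ineq: "(\<Sum>x\<in>A \<times> G. real (P_multi D m (fst x) (snd x))) \<le> (\<Sum>x\<in>A \<times> G. real (P_single D (fst x)))" .
  have "(\<Sum>\<pi> \<in> A. \<Sum>g \<in> G. real (P_single D \<pi>) - real (P_multi D m \<pi> g))
      = (\<Sum>x\<in>A \<times> G. real (P_single D (fst x)) - real (P_multi D m (fst x) (snd x)))"
    by (simp add: sum.cartesian_product split_def)
  also have "\<dots> = (\<Sum>x\<in>A \<times> G. real (P_single D (fst x))) - (\<Sum>x\<in>A \<times> G. real (P_multi D m (fst x) (snd x)))"
    by (simp add: sum_subtractf)
  finally have "(\<Sum>\<pi> \<in> A. \<Sum>g \<in> G. real (P_single D \<pi>) - real (P_multi D m \<pi> g)) \<ge> 0"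
    using ineq by simp
  then show ?thesis unfolding A_def G_def by simp
qed

end
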